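(* Let $0<p<\infty$ and let $m,n\ge1$ be integers. Then there does not exist any continuous map $\tau:\mathbb{R}^m\to\mathbb{R}^n$ such that the composition operator $C_\tau f=f\circ\tau$ is bounded from $L^{p,\infty}(\mathbb{R}^n)$ to $L^\infty(\mathbb{R}^m)$.
   Context: $\mathbb{R}^n,\mathbb{R}^m$ carry Lebesgue measure $|\cdot|$. $L^{p,\infty}(\mathbb{R}^n)$ (weak $L^p$) consists of measurable $f$ with $\|f\|_{L^{p,\infty}}=\sup_{t>0}t\,|\{x:|f(x)|>t\}|^{1/p}<\infty$. Boundedness means $\|C_\tau f\|_{L^\infty(\mathbb{R}^m)}\le C\|f\|_{L^{p,\infty}(\mathbb{R}^n)}$ for some $C$ and all $f\in L^{p,\infty}(\mathbb{R}^n)$. *)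

theory Defs
  imports "HOL-Analysis.Analysis"
begin

text \<open>Weak L^p space on a Euclidean space with Lebesgue measure:
  f is Lebesgue measurable and t |{|f|>t}|^(1/p) is bounded for t>0.\<close>
definition weak_Lp :: "real \<Rightarrow> ('a::euclidean_space \<Rightarrow> real) \<Rightarrow> bool" where
  "weak_Lp p f \<longleftrightarrow> f \<in> borel_measurable lebesgue \<and>
     (\<exists>K. \<forall>t>0. emeasure lebesgue {x. t < \<bar>f x\<bar>} \<le> ennreal ((K / t) powr p))"

definition weak_Lp_norm :: "real \<Rightarrow> ('a::euclidean_space \<Rightarrow> real) \<Rightarrow> real" where
  "weak_Lp_norm p f = (SUP t\<in>{0<..}. t * (measure lebesgue {x. t < \<bar>f x\<bar>}) powr (1 / p))"

end

theory Submission
  imports Defs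
begin

lemma small_ball:
  fixes y0 :: "'a::euclidean_space" and \<eta> :: real
  assumes "\<eta> > 0"
  shows "\<exists>r>0. measure lborel (ball y0 r) < \<eta>"
proof -
  define c1 where "c1 = measure lborel (ball (0::'a) 1)"
  have c1: "c1 \<ge> 0" unfolding c1_def by simp
  define r where "r = min (1/2) (\<eta> / (2*(c1+1)))"
  have r0: "r > 0" "r \<le> 1" using assms c1 by (auto simp: r_def)
  have "r ^ DIM('a) \<le> r" using r0 by (simp add: power_le_one_iff DIM_positive power_decreasing[of 1 "DIM('a)" r, simplified])
  then have "measure lborel (ball y0 r) \<le> r * c1"
    using content_ball_conv_unit_ball[of r y0] r0 c1 unfolding c1_def by (simp add: mult_right_mono)
  also have "r * c1 \<le> r * (c1 + 1)" using r0 by simp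
  also have "\<dots> < \<eta>"
  proof -
    have "r \<le> \<eta> / (2*(c1+1))" by (simp add: r_def)
    then have "r * (c1+1) \<le> \<eta>/2" using c1 by (simp add: field_simps)
    then show ?thesis using assms by simp
  qed
  finally show ?thesis using r0 by blast
qed

theorem proposition5p5:
  fixes p :: real and \<tau> :: "real^'m \<Rightarrow> real^'n"
  assumes "0 < p" and "continuous_on UNIV \<tau>"
  shows "\<not> (\<exists>C. \<forall>f :: real^'n \<Rightarrow> real. weak_Lp p f \<longrightarrow>
            (AE x in lebesgue. \<bar>f (\<tau> x)\<bar> \<le> C * weak_Lp_norm p f))"
proof
  assume "\<exists>C. \<forall>f :: real^'n \<Rightarrow> real. weak_Lp p f \<longrightarrow>
            (AE x in lebesgue. \<bar>f (\<tau> x)\<bar> \<le> C * weak_Lp_norm p f)"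
  then obtain C where HC: "\<And>f :: real^'n \<Rightarrow> real. weak_Lp p f \<Longrightarrow>
            (AE x in lebesgue. \<bar>f (\<tau> x)\<bar> \<le> C * weak_Lp_norm p f)" by blast
  define C' where "C' = max C 0"
  define \<eta> where "\<eta> = (1 / (C' + 1)) powr p"
  have C'0: "C' \<ge> 0" by (simp add: C'_def)
  have \<eta>0: "\<eta> > 0" using C'0 by (simp add: \<eta>_def)
  define y0 where "y0 = \<tau> 0"
  obtain r where r: "r > 0" "measure lborel (ball y0 r) < \<eta>" using small_ball[OF \<eta>0] by blast
  define S where "S = ball y0 r"
  define a where "a = measure lborel S powr (1/p)"
  have a0: "a \<ge> 0" by (simp add: a_def)
  have "a < \<eta> powr (1/p)" unfolding a_def S_def
    using r assms(1) by (intro powr_less_mono2) auto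
  also have "\<eta> powr (1/p) = 1 / (C' + 1)" using assms(1) C'0
    by (simp add: \<eta>_def powr_powr)
  finally have aC: "a < 1 / (C' + 1)" .
  define f :: "real^'n \<Rightarrow> real" where "f = indicator S"
  have lev: "{x. t < \<bar>f x\<bar>} = (if t < 1 then S else {})" if "t > 0" for t
    using that by (auto simp: f_def indicator_def)
  have mS: "measure lebesgue S = measure lborel S"
    unfolding S_def by (simp add: measure_completion)
  have wf: "weak_Lp p f"
    unfolding weak_Lp_def
  proof (intro conjI exI allI impI)
    show "f \<in> borel_measurable lebesgue" unfolding f_def S_def
      by (intro borel_measurable_indicator) auto
  next
    fix t :: real assume t: "t > 0"
    show "emeasure lebesgue {x. t < \<bar>f x\<bar>} \<le> ennreal ((a / t) powr p)"
    proof (cases "t < 1")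
      case True
      have "emeasure lebesgue S = ennreal (measure lborel S)"
        unfolding S_def using emeasure_lborel_ball_finite[of y0 r]
        by (simp add: emeasure_eq_ennreal_measure less_top)
      also have "measure lborel S = a powr p" using assms(1) by (simp add: a_def powr_powr)
      also have "a powr p \<le> (a / t) powr p"
        using True t a0 assms(1) by (intro powr_mono2) (auto simp: field_simps mult_left_le)
      finally show ?thesis using lev[OF t] True by (simp add: ennreal_leI)
    qed (use lev[OF t] in simp)
  qed
  have Nle: "weak_Lp_norm p f \<le> a"
    unfolding weak_Lp_norm_def
  proof (rule cSUP_least)
    fix t :: real assume "t \<in> {0<..}"
    then have t: "t > 0" by simp
    show "t * measure lebesgue {x. t < \<bar>f x\<bar>} powr (1 / p) \<le> a"
    proof (cases "t < 1")
      case True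
      then show ?thesis using lev[OF t] mS a0 t by (simp add: a_def[symmetric] mult_left_le_one_le)
    qed (use lev[OF t] a0 in simp)
  qed auto
  have Nge: "weak_Lp_norm p f \<ge> 0"
    unfolding weak_Lp_norm_def
  proof -
    have bdd: "bdd_above ((\<lambda>t. t * measure lebesgue {x. t < \<bar>f x\<bar>} powr (1 / p)) ` {0<..})"
    proof (rule bdd_aboveI2)
      fix t :: real assume "t \<in> {0<..}"
      then have t: "t > 0" by simp
      show "t * measure lebesgue {x. t < \<bar>f x\<bar>} powr (1 / p) \<le> a"
      proof (cases "t < 1")
      case True
      then show ?thesis using lev[OF t] mS a0 t by (simp add: a_def[symmetric] mult_left_le_one_le)
    qed (use lev[OF t] a0 in simp)
    qed
    have "0 \<le> 1 * measure lebesgue {x. 1 < \<bar>f x\<bar>} powr (1 / p)" by simp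
    also have "\<dots> \<le> (SUP t\<in>{0<..}. t * measure lebesgue {x. t < \<bar>f x\<bar>} powr (1 / p))"
      by (rule cSUP_upper[OF _ bdd]) auto
    finally show "0 \<le> (SUP t\<in>{0<..}. t * measure lebesgue {x. t < \<bar>f x\<bar>} powr (1 / p))" .
  qed
  have CN: "C * weak_Lp_norm p f < 1"
  proof -
    have "C * weak_Lp_norm p f \<le> C' * weak_Lp_norm p f"
      using Nge by (simp add: C'_def mult_right_mono)
    also have "\<dots> \<le> C' * a" using Nle C'0 by (simp add: mult_left_mono)
    also have "\<dots> < 1" using aC C'0 a0
      by (simp add: field_simps)
    finally show ?thesis .
  qed
  have "AE x in lebesgue. \<bar>f (\<tau> x)\<bar> \<le> C * weak_Lp_norm p f" using HC[OF wf] .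
  then have "AE x in lebesgue. x \<in> \<tau> -` (- S)"
    by eventually_elim (use CN in \<open>auto simp: f_def indicator_def split: if_splits\<close>)
  moreover have "closed (\<tau> -` (- S))"
    using assms(2) unfolding S_def by (intro closed_vimage) auto
  ultimately have "0 \<in> \<tau> -` (- S)" using mem_closed_if_AE_lebesgue by blast
  then show False using r by (simp add: S_def y0_def)
qed

end
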